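(* Let $g\in\mathscr T'$ and $\Psi,\Phi\in\mathcal F_{\rm fin}(\mathscr T)$. Then for every net $(g_\alpha)$ in $\mathfrak h$ with $\langle g_\alpha,f\rangle\to\langle g,f\rangle$ for all $f\in\mathscr T$, $$\langle\Psi,\Phi\rangle_g=\lim_\alpha\frac{\langle e^{a^\dagger(g_\alpha)}\Psi,e^{a^\dagger(g_\alpha)}\Phi\rangle_{\mathcal F(\mathfrak h)}}{\langle e^{a^\dagger(g_\alpha)}\Omega,e^{a^\dagger(g_\alpha)}\Omega\rangle_{\mathcal F(\mathfrak h)}}.$$
   Context: Let $\mathfrak h$ be a complex Hilbert space (inner products antilinear in the first argument), $\mathscr T$ a topological vector space continuously embedded in $\mathfrak h$ with dense image, $\mathscr T'$ the space of continuous antilinear functionals on $\mathscr T$; write $\langle\varphi,f\rangle:=\overline{\varphi(f)}$ for $\varphi\in\mathscr T'$, $f\in\mathscr T$ (equal to $\langle\varphi,f\rangle_{\mathfrak h}$ if $\varphi\in\mathfrak h$). $\mathcal F(\mathfrak h)$ is the symmetric Fock space with vacuum $\Omega$; $\mathcal F_{\rm fin}(\mathscr T)$ the vectors with finitely many nonzero components, the $n$-th in the algebraic symmetric tensor product of $n$ copies of $\mathscr T$. For $h\in\mathfrak h$, $a^\dagger(h)$ is the usual creation operator and $e^{a^\dagger(h)}:=\sum_k a^\dagger(h)^k/k!$ (convergent in Fock norm on finite-particle vectors). For $g\in\mathscr T'$, $a(g)$ on $\mathcal F_{\rm fin}(\mathscr T)$ is defined linearly by $(a(g)\Psi)_n=\frac{\sqrt{n+1}}{(n+1)!}\sum_{\sigma\in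 S_{n+1}}\langle g,\psi_{\sigma(1)}\rangle\psi_{\sigma(2)}\otimes\cdots\otimes\psi_{\sigma(n+1)}$ for $\Psi_{n+1}=\psi_1\otimes_s\cdots\otimes_s\psi_{n+1}$; $e^{a(g)}=\sum_k a(g)^k/k!$ (finite sum), and $\langle\Psi,\Phi\rangle_g:=\langle e^{a(g)}\Psi,e^{a(g)}\Phi\rangle_{\mathcal F(\mathfrak h)}$. *)

theory Defs
  imports "HOL-Analysis.Analysis" "HOL-Library.Multiset"
begin

text \<open>A complex Hilbert space is modelled as an additive group 'h together with a
complex scalar multiplication scal and an inner product ip, antilinear in the
first and linear in the second argument, complete for the induced norm.\<close>

definition hnorm :: "('h \<Rightarrow> 'h \<Rightarrow> complex) \<Rightarrow> 'h \<Rightarrow> real" where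
  "hnorm ip x = sqrt (Re (ip x x))"

definition complex_hilbert_space ::
  "(complex \<Rightarrow> 'h::ab_group_add \<Rightarrow> 'h) \<Rightarrow> ('h \<Rightarrow> 'h \<Rightarrow> complex) \<Rightarrow> bool" where
  "complex_hilbert_space scal ip \<longleftrightarrow>
     (\<forall>x. scal 1 x = x) \<and>
     (\<forall>a b x. scal a (scal b x) = scal (a * b) x) \<and>
     (\<forall>a b x. scal (a + b) x = scal a x + scal b x) \<and>
     (\<forall>a x y. scal a (x + y) = scal a x + scal a y) \<and>
     (\<forall>x y z. ip x (y + z) = ip x y + ip x z) \<and>
     (\<forall>a x y. ip x (scal a y) = a * ip x y) \<and>
     (\<forall>x y. ip y x = cnj (ip x y)) \<and>
     (\<forall>x. 0 \<le> Re (ip x x)) \<and>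
     (\<forall>x. ip x x = 0 \<longleftrightarrow> x = 0) \<and>
     (\<forall>X :: nat \<Rightarrow> 'h.
        (\<forall>e>0. \<exists>N. \<forall>m\<ge>N. \<forall>n\<ge>N. hnorm ip (X m - X n) < e) \<longrightarrow>
        (\<exists>L. (\<lambda>n. hnorm ip (X n - L)) \<longlonglongrightarrow> 0))"

definition dense_cont_embedded ::
  "(complex \<Rightarrow> 'h::ab_group_add \<Rightarrow> 'h) \<Rightarrow> ('h \<Rightarrow> 'h \<Rightarrow> complex) \<Rightarrow> 'h set \<Rightarrow> 'h topology \<Rightarrow> bool" where
  "dense_cont_embedded scal ip T tau \<longleftrightarrow>
     topspace tau = T \<and>
     0 \<in> T \<and> (\<forall>s\<in>T. \<forall>t\<in>T. s + t \<in> T) \<and> (\<forall>a. \<forall>t\<in>T. scal a t \<in> T) \<and>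
     continuous_map (prod_topology tau tau) tau (\<lambda>(s, t). s + t) \<and>
     continuous_map (prod_topology (euclidean :: complex topology) tau) tau (\<lambda>(a, t). scal a t) \<and>
     (\<forall>t\<in>T. \<forall>e>0. \<exists>U. openin tau U \<and> t \<in> U \<and> (\<forall>s\<in>U. hnorm ip (s - t) < e)) \<and>
     (\<forall>x. \<forall>e>0. \<exists>t\<in>T. hnorm ip (x - t) < e)"

text \<open>T': continuous antilinear functionals on T.  For g in T', the pairing
<g,f> is cnj (g f).\<close>

definition antidual ::
  "(complex \<Rightarrow> 'h::ab_group_add \<Rightarrow> 'h) \<Rightarrow> 'h set \<Rightarrow> 'h topology \<Rightarrow> ('h \<Rightarrow> complex) set" where
  "antidual scal T tau =
     {g. (\<forall>s\<in>T. \<forall>t\<in>T. g (s + t) = g s + g t) \<and>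
         (\<forall>a. \<forall>t\<in>T. g (scal a t) = cnj a * g t) \<and>
         continuous_map tau (euclidean :: complex topology) g}"

definition pair :: "('h \<Rightarrow> complex) \<Rightarrow> 'h \<Rightarrow> complex" where
  "pair g f = cnj (g f)"

text \<open>A finite-particle vector is represented by a finite multiset of terms (c, [x1,...,xn]),
standing for the sum of the vectors c * (x1 (x)s ... (x)s xn), where
x1 (x)s ... (x)s xn = (1/n!) * sum over sigma of x_sigma(1) (x) ... (x) x_sigma(n).
The term (c, []) stands for c * Omega.\<close>

type_synonym 'h fvec = "(complex \<times> 'h list) multiset"

definition vac :: "'h fvec" where
  "vac = {#(1, [])#}"

definition in_Ffin :: "'h set \<Rightarrow> 'h fvec \<Rightarrow> bool" where
  "in_Ffin T \<Psi> \<longleftrightarrow> (\<forall>t\<in>#\<Psi>. set (snd t) \<subseteq> T)"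

text \<open>Inner product of two symmetric products, obtained by expanding the symmetrisations
and using the product inner product on elementary tensors.\<close>

definition sym_ip :: "('h \<Rightarrow> 'h \<Rightarrow> complex) \<Rightarrow> 'h list \<Rightarrow> 'h list \<Rightarrow> complex" where
  "sym_ip ip xs ys =
     (if length xs = length ys then
        (let n = length xs in
          (1 / of_nat (fact n))^2 *
          (\<Sum>\<sigma>\<in>{\<sigma>. \<sigma> permutes {..<n}}. \<Sum>\<tau>\<in>{\<tau>. \<tau> permutes {..<n}}.
             \<Prod>i<n. ip (xs ! \<sigma> i) (ys ! \<tau> i)))
      else 0)"

definition fin_ip :: "('h \<Rightarrow> 'h \<Rightarrow> complex) \<Rightarrow> 'h fvec \<Rightarrow> 'h fvec \<Rightarrow> complex" where
  "fin_ip ip \<Psi> \<Phi> =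
     (\<Sum>t\<in>#\<Psi>. \<Sum>u\<in>#\<Phi>. cnj (fst t) * fst u * sym_ip ip (snd t) (snd u))"

definition scaleF :: "complex \<Rightarrow> 'h fvec \<Rightarrow> 'h fvec" where
  "scaleF a \<Psi> = image_mset (\<lambda>(c, xs). (a * c, xs)) \<Psi>"

definition compF :: "nat \<Rightarrow> 'h fvec \<Rightarrow> 'h fvec" where
  "compF n \<Psi> = filter_mset (\<lambda>(c, xs). length xs = n) \<Psi>"

definition cre :: "'h \<Rightarrow> 'h fvec \<Rightarrow> 'h fvec" where
  "cre h \<Psi> = image_mset (\<lambda>(c, xs). (complex_of_real (sqrt (real (length xs + 1))) * c, h # xs)) \<Psi>"

text \<open>Annihilation by g in T' on the term c * (psi_1 (x)s ... (x)s psi_(n+1)), as in the paper: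
sqrt(n+1)/(n+1)! * sum over sigma of <g, psi_sigma(1)> psi_sigma(2) (x) ... (x) psi_sigma(n+1).
(Indices are 0-based below; the vacuum component is annihilated.)\<close>

definition ann_term :: "('h \<Rightarrow> complex) \<Rightarrow> complex \<times> 'h list \<Rightarrow> 'h fvec" where
  "ann_term g t =
     (let c = fst t; xs = snd t; m = length xs in
      if m = 0 then {#}
      else image_mset
             (\<lambda>\<sigma>. (c * complex_of_real (sqrt (real m) / real (fact m)) * pair g (xs ! \<sigma> 0),
                   map (\<lambda>i. xs ! \<sigma> i) [1..<m]))
             (mset_set {\<sigma>. \<sigma> permutes {..<m}}))"

definition ann :: "('h \<Rightarrow> complex) \<Rightarrow> 'h fvec \<Rightarrow> 'h fvec" where
  "ann g \<Psi> = (\<Sum>t\<in>#\<Psi>. ann_term g t)"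

definition max_len :: "'h fvec \<Rightarrow> nat" where
  "max_len \<Psi> = Max (insert 0 ((\<lambda>t. length (snd t)) ` set_mset \<Psi>))"

text \<open>e^{a(g)} Psi = sum_k a(g)^k Psi / k! (a finite sum: a(g)^k Psi = 0 for k > max_len Psi).\<close>

definition exp_ann :: "('h \<Rightarrow> complex) \<Rightarrow> 'h fvec \<Rightarrow> 'h fvec" where
  "exp_ann g \<Psi> = (\<Sum>k\<le>max_len \<Psi>. scaleF (1 / of_nat (fact k)) ((ann g ^^ k) \<Psi>))"

definition g_ip :: "('h \<Rightarrow> 'h \<Rightarrow> complex) \<Rightarrow> ('h \<Rightarrow> complex) \<Rightarrow> 'h fvec \<Rightarrow> 'h fvec \<Rightarrow> complex" where
  "g_ip ip g \<Psi> \<Phi> = fin_ip ip (exp_ann g \<Psi>) (exp_ann g \<Phi>)"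

text \<open>n-particle component of e^{a^dagger(h)} Psi = sum_k a^dagger(h)^k Psi / k!:
it is sum over k <= n of a^dagger(h)^k Psi_(n-k) / k!.\<close>

definition exp_cre_comp :: "'h \<Rightarrow> nat \<Rightarrow> 'h fvec \<Rightarrow> 'h fvec" where
  "exp_cre_comp h n \<Psi> = (\<Sum>k\<le>n. scaleF (1 / of_nat (fact k)) ((cre h ^^ k) (compF (n - k) \<Psi>)))"

text \<open>Fock-space inner product < e^{a^dagger(h)} Psi, e^{a^dagger(h)} Phi >, computed as
the sum over n of the inner products of the n-particle components.\<close>

definition exp_cre_ip :: "('h \<Rightarrow> 'h \<Rightarrow> complex) \<Rightarrow> 'h \<Rightarrow> 'h fvec \<Rightarrow> 'h fvec \<Rightarrow> complex" where
  "exp_cre_ip ip h \<Psi> \<Phi> = (\<Sum>n. fin_ip ip (exp_cre_comp h n \<Psi>) (exp_cre_comp h n \<Phi>))"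

end

theory Submission
  imports Defs "HOL-Combinatorics.Permutations"
begin

definition per_f :: "nat \<Rightarrow> (nat \<Rightarrow> nat \<Rightarrow> complex) \<Rightarrow> complex" where
  "per_f n A = (\<Sum>\<tau>\<in>{\<tau>. \<tau> permutes {..<n}}. \<Prod>r<n. A r (\<tau> r))"

lemma per_f_row_perm:
  assumes "\<sigma> permutes {..<n}"
  shows "per_f n (\<lambda>r c. A (\<sigma> r) c) = per_f n A"
proof -
  have "per_f n (\<lambda>r c. A (\<sigma> r) c) = (\<Sum>\<tau>\<in>{\<tau>. \<tau> permutes {..<n}}. \<Prod>r<n. A r ((\<tau> \<circ> inv \<sigma>) r))"
    unfolding per_f_def
    by (rule sum.cong[OF refl], subst prod.permutes_inv[OF assms, of "\<lambda>a b. A a (_ b)"]) simp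
  also have "\<dots> = per_f n A"
    unfolding per_f_def
    by (rule sum_permutations_compose_right[symmetric, OF permutes_inv[OF assms]])
  finally show ?thesis .
qed

lemma per_f_col_perm:
  assumes "\<sigma> permutes {..<n}"
  shows "per_f n (\<lambda>r c. A r (\<sigma> c)) = per_f n A"
  unfolding per_f_def
  using setum_permutations_compose_left[OF assms, of "\<lambda>\<tau>. \<Prod>r<n. A r (\<tau> r)"]
  by simp

lemma per_f_transpose:
  "per_f n (\<lambda>r c. A c r) = per_f n A"
proof -
  have "per_f n (\<lambda>r c. A c r) = (\<Sum>\<tau>\<in>{\<tau>. \<tau> permutes {..<n}}. \<Prod>r<n. A r (inv \<tau> r))"
    unfolding per_f_def
    by (rule sum.cong[OF refl], subst prod.permutes_inv[of _ _ "\<lambda>a b. A a b"]) auto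
  also have "\<dots> = per_f n A"
    unfolding per_f_def
    by (rule sum_permutations_inverse[symmetric])
  finally show ?thesis .
qed

lemma per_f_const_rows:
  "per_f n (\<lambda>r c. B c) = fact n * (\<Prod>c<n. B c)"
proof -
  have "per_f n (\<lambda>r c. B c) = (\<Sum>\<tau>\<in>{\<tau>. \<tau> permutes {..<n}}. \<Prod>c<n. B c)"
    unfolding per_f_def
  proof (rule sum.cong[OF refl])
    fix \<tau> assume "\<tau> \<in> {\<tau>. \<tau> permutes {..<n}}"
    hence "\<tau> permutes {..<n}" by simp
    from prod.permute[OF this, of B] show "(\<Prod>r<n. B (\<tau> r)) = (\<Prod>c<n. B c)"
      by (simp add: comp_def)
  qed
  also have "\<dots> = fact n * (\<Prod>c<n. B c)"
    by (simp add: card_permutations)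
  finally show ?thesis .
qed

lemma per_f_last_row:
  "per_f (Suc n) A = (\<Sum>b<Suc n. A n b * per_f n (\<lambda>r c. A r (Transposition.transpose n b c)))"
proof -
  have "per_f (Suc n) A = (\<Sum>b\<in>insert n {..<n}. \<Sum>q\<in>{p. p permutes {..<n}}.
          \<Prod>r<Suc n. A r ((Transposition.transpose n b \<circ> q) r))"
    unfolding per_f_def lessThan_Suc by (rule sum_over_permutations_insert) auto
  also have "\<dots> = (\<Sum>b\<in>insert n {..<n}. A n b * per_f n (\<lambda>r c. A r (Transposition.transpose n b c)))"
  proof (rule sum.cong[OF refl])
    fix b assume b: "b \<in> insert n {..<n}"
    show "(\<Sum>q\<in>{p. p permutes {..<n}}. \<Prod>r<Suc n. A r ((Transposition.transpose n b \<circ> q) r))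
          = A n b * per_f n (\<lambda>r c. A r (Transposition.transpose n b c))"
      unfolding per_f_def sum_distrib_left
    proof (rule sum.cong[OF refl])
      fix q assume "q \<in> {p. p permutes {..<n}}"
      hence q: "q permutes {..<n}" by simp
      have "q n = n" using q by (simp add: permutes_not_in)
      thus "(\<Prod>r<Suc n. A r ((Transposition.transpose n b \<circ> q) r)) = A n b * (\<Prod>r<n. A r (Transposition.transpose n b (q r)))"
        by (simp add: lessThan_Suc)
    qed
  qed
  finally show ?thesis by (simp add: lessThan_Suc)
qed

lemma sum_perm_first:
  "(\<Sum>\<sigma>\<in>{\<sigma>. \<sigma> permutes {..<Suc m}}. F (\<sigma> 0)) = fact m * (\<Sum>i<Suc m. F i)"
proof -
  have tp: "Transposition.transpose 0 m permutes {..<Suc m}" by (rule permutes_swap_id) auto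
  have "(\<Sum>\<sigma>\<in>{\<sigma>. \<sigma> permutes {..<Suc m}}. F (\<sigma> 0)) =
        (\<Sum>\<sigma>\<in>{\<sigma>. \<sigma> permutes {..<Suc m}}. F ((\<sigma> \<circ> Transposition.transpose 0 m) m))"
    by simp
  also have "\<dots> = (\<Sum>\<sigma>\<in>{\<sigma>. \<sigma> permutes {..<Suc m}}. F (\<sigma> m))"
    by (rule sum_permutations_compose_right[OF tp, symmetric, of "\<lambda>\<sigma>. F (\<sigma> m)"])
  also have "\<dots> = (\<Sum>b\<in>insert m {..<m}. \<Sum>q\<in>{p. p permutes {..<m}}. F ((Transposition.transpose m b \<circ> q) m))"
    unfolding lessThan_Suc by (rule sum_over_permutations_insert) auto
  also have "\<dots> = (\<Sum>b\<in>insert m {..<m}. \<Sum>q\<in>{p. p permutes {..<m}}. F b)"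
    by (intro sum.cong refl) (simp add: permutes_not_in)
  also have "\<dots> = fact m * (\<Sum>i<Suc m. F i)"
    by (simp add: card_permutations lessThan_Suc sum_distrib_left distrib_left)
  finally show ?thesis .
qed


lemma perm_lt: "p permutes {..<n} \<Longrightarrow> i < n \<Longrightarrow> p i < n"
  using permutes_in_image by fastforce

definition perK :: "('a \<Rightarrow> 'b \<Rightarrow> complex) \<Rightarrow> 'a list \<Rightarrow> 'b list \<Rightarrow> complex" where
  "perK k as bs = (if length as = length bs then per_f (length as) (\<lambda>r c. k (as ! r) (bs ! c)) else 0)"

definition dl :: "nat \<Rightarrow> 'a list \<Rightarrow> 'a list" where
  "dl j xs = take j xs @ drop (Suc j) xs"

lemma length_dl[simp]: "j < length xs \<Longrightarrow> length (dl j xs) = length xs - 1"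
  by (simp add: dl_def)

lemma mset_dl: "j < length xs \<Longrightarrow> mset (dl j xs) = mset xs - {#xs ! j#}"
proof -
  assume j: "j < length xs"
  have "mset xs = mset (take j xs @ xs ! j # drop (Suc j) xs)"
    using id_take_nth_drop[OF j] by simp
  thus ?thesis by (simp add: dl_def)
qed

lemma set_dl: "j < length xs \<Longrightarrow> set (dl j xs) \<subseteq> set xs"
  by (metis mset_dl in_diffD set_mset_mset subsetI)

lemma perK_rows_mset:
  assumes "mset as = mset as'"
  shows "perK k as bs = perK k as' bs"
proof -
  obtain p where p: "p permutes {..<length as'}" "permute_list p as' = as"
    using mset_eq_permutation[OF assms] by blast
  have len: "length as = length as'" using assms mset_eq_length by blast
  show ?thesis
  proof (cases "length as = length bs")
    case True
    have "per_f (length as) (\<lambda>r c. k (as ! r) (bs ! c)) =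
          per_f (length as') (\<lambda>r c. (\<lambda>r c. k (as' ! r) (bs ! c)) (p r) c)"
      unfolding len[symmetric] per_f_def
      apply (intro sum.cong refl prod.cong)
      using p len by (auto simp: permute_list_nth)
    also have "\<dots> = per_f (length as') (\<lambda>r c. k (as' ! r) (bs ! c))"
      by (rule per_f_row_perm[OF p(1)])
    finally show ?thesis using True len by (simp add: perK_def)
  qed (use len in \<open>simp add: perK_def\<close>)
qed

lemma perK_transpose: "perK k as bs = perK (\<lambda>b a. k a b) bs as"
  unfolding perK_def using per_f_transpose[of "length bs" "\<lambda>r c. k (as ! c) (bs ! r)"] by auto

lemma perK_cols_mset:
  assumes "mset bs = mset bs'"
  shows "perK k as bs = perK k as bs'"
  by (metis perK_transpose perK_rows_mset assms)

lemma perK_snoc_row: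
  "perK k (as @ [a]) bs = (\<Sum>j<length bs. k a (bs ! j) * perK k as (dl j bs))"
proof (cases "length bs = Suc (length as)")
  case True
  define n where "n = length as"
  have lbs: "length bs = Suc n" using True n_def by simp
  have "perK k (as @ [a]) bs = per_f (Suc n) (\<lambda>r c. k ((as @ [a]) ! r) (bs ! c))"
    by (simp add: perK_def lbs n_def)
  also have "\<dots> = (\<Sum>b<Suc n. k a (bs ! b) *
       per_f n (\<lambda>r c. k ((as @ [a]) ! r) (bs ! Transposition.transpose n b c)))"
    by (subst per_f_last_row) (simp add: n_def)
  also have "\<dots> = (\<Sum>b<Suc n. k a (bs ! b) * perK k as (dl b bs))"
  proof (intro sum.cong refl arg_cong2[where f="(*)"])
    fix b assume b: "b \<in> {..<Suc n}"
    define bs' where "bs' = map (\<lambda>c. bs ! Transposition.transpose n b c) [0..<n]"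
    have "permute_list (Transposition.transpose n b) bs = bs' @ [bs ! b]"
      unfolding permute_list_def bs'_def lbs by simp
    moreover have "Transposition.transpose n b permutes {..<length bs}"
      by (rule permutes_swap_id) (use b lbs in auto)
    ultimately have "mset bs = mset (bs' @ [bs ! b])"
      by (metis mset_permute_list)
    hence "mset bs' + {#bs ! b#} = mset bs" by simp
    hence "mset bs' = mset bs - {#bs ! b#}" by (metis add_diff_cancel_right')
    hence "mset bs' = mset (dl b bs)" using b lbs by (simp add: mset_dl)
    hence "perK k as (dl b bs) = perK k as bs'" by (metis perK_cols_mset)
    also have "\<dots> = per_f n (\<lambda>r c. k ((as @ [a]) ! r) (bs ! Transposition.transpose n b c))"
      unfolding perK_def bs'_def n_def
      by (auto intro!: sum.cong prod.cong simp: per_f_def nth_append perm_lt)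
    finally show "per_f n (\<lambda>r c. k ((as @ [a]) ! r) (bs ! Transposition.transpose n b c)) = perK k as (dl b bs)" by simp
  qed
  finally show ?thesis using lbs by simp
next
  case False
  hence "\<And>j. j < length bs \<Longrightarrow> length as \<noteq> length (dl j bs)" by auto
  thus ?thesis using False by (simp add: perK_def)
qed

lemma perK_Cons_row:
  "perK k (a # as) bs = (\<Sum>j<length bs. k a (bs ! j) * perK k as (dl j bs))"
proof -
  have "perK k (a # as) bs = perK k (as @ [a]) bs" by (rule perK_rows_mset) simp
  thus ?thesis by (simp add: perK_snoc_row)
qed

lemma perK_Cons_col:
  "perK k as (b # bs) = (\<Sum>j<length as. k (as ! j) b * perK k (dl j as) bs)"
  by (subst perK_transpose, subst perK_Cons_row, subst perK_transpose) simp

fun kz :: "('h \<Rightarrow> 'h \<Rightarrow> complex) \<Rightarrow> ('h \<Rightarrow> complex) \<Rightarrow> complex \<Rightarrow> 'h option \<Rightarrow> 'h option \<Rightarrow> complex" where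
  "kz ip g z None None = z"
| "kz ip g z None (Some y) = pair g y"
| "kz ip g z (Some x) None = cnj (pair g x)"
| "kz ip g z (Some x) (Some y) = ip x y"

definition NS :: "nat \<Rightarrow> 'h list \<Rightarrow> 'h option list" where
  "NS r xs = replicate r None @ map Some xs"

definition Tz :: "('h \<Rightarrow> 'h \<Rightarrow> complex) \<Rightarrow> ('h \<Rightarrow> complex) \<Rightarrow> complex \<Rightarrow> nat \<Rightarrow> 'h list \<Rightarrow> 'h list \<Rightarrow> complex" where
  "Tz ip g z n xs ys = (if length xs \<le> n \<and> length ys \<le> n then
     perK (kz ip g z) (NS (n - length xs) xs) (NS (n - length ys) ys) / (fact (n - length xs) * fact (n - length ys))
   else 0)"

fun Qrec :: "('h \<Rightarrow> 'h \<Rightarrow> complex) \<Rightarrow> ('h \<Rightarrow> complex) \<Rightarrow> 'h list \<Rightarrow> 'h list \<Rightarrow> complex" where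
  "Qrec ip g [] ys = prod_list (map (pair g) ys)"
| "Qrec ip g (x # xs) ys = cnj (pair g x) * Qrec ip g xs ys + (\<Sum>j<length ys. ip x (ys ! j) * Qrec ip g xs (dl j ys))"

lemma prod_list_nth: "prod_list xs = (\<Prod>i<length xs. xs ! i)"
  by (induction xs) (simp_all add: prod.lessThan_Suc_shift del: prod.lessThan_Suc)

lemma prod_map_nth: "(\<Prod>c<length xs. f (xs ! c)) = prod_list (map f xs)"
  by (simp add: prod_list_nth)

lemma per_f_cong: "(\<And>r c. r < n \<Longrightarrow> c < n \<Longrightarrow> A r c = B r c) \<Longrightarrow> per_f n A = per_f n B"
  unfolding per_f_def by (intro sum.cong prod.cong refl) (auto simp: perm_lt)

lemma Tz_Nil:
  "Tz ip g z n [] ys = (if length ys \<le> n then z ^ (n - length ys) / fact (n - length ys) * prod_list (map (pair g) ys) else 0)"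
proof (cases "length ys \<le> n")
  case True
  define m where "m = n - length ys"
  have rn: "replicate n None = NS n []" by (simp add: NS_def)
  have "perK (kz ip g z) (NS n []) (NS m ys) = per_f n (\<lambda>r c. kz ip g z None (NS m ys ! c))"
    using True by (simp add: perK_def NS_def m_def, intro per_f_cong) simp
  also have "\<dots> = fact n * prod_list (map (kz ip g z None) (NS m ys))"
    using True prod_map_nth[of "kz ip g z None" "NS m ys"] by (simp add: per_f_const_rows NS_def m_def)
  also have "map (kz ip g z None) (NS m ys) = replicate m z @ map (pair g) ys"
    by (simp add: NS_def comp_def)
  finally show ?thesis using True
    by (simp add: Tz_def m_def[symmetric] prod_list_replicate)
qed (simp add: Tz_def)

lemma sum_lessThan_add: "(\<Sum>j<l+(q::nat). f j) = (\<Sum>j<l. f j) + (\<Sum>i<q. f (l + i))"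
  by (induction q) (auto simp: add_ac)

lemma dl_replicate_append: "dl (r + i) (replicate r a @ zs) = replicate r a @ dl i zs"
  by (simp add: dl_def)

lemma dl_map: "dl i (map f zs) = map f (dl i zs)"
  by (simp add: dl_def take_map drop_map)

lemma Tz_Cons:
  "Tz ip g z (Suc n) (x # xs) ys = cnj (pair g x) * Tz ip g z n xs ys + (\<Sum>j<length ys. ip x (ys ! j) * Tz ip g z n xs (dl j ys))"
proof (cases "length xs \<le> n \<and> length ys \<le> Suc n")
  case True
  define k where "k = n - length xs"
  define l where "l = Suc n - length ys"
  define q where "q = length ys"
  define KK where "KK = kz ip g z"
  have lq: "l + q = Suc n" using True by (simp add: l_def q_def)
  have "perK KK (NS k (x # xs)) (NS l ys) = perK KK (Some x # NS k xs) (NS l ys)"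
    by (rule perK_rows_mset) (simp add: NS_def)
  also have "\<dots> = (\<Sum>j<l+q. KK (Some x) (NS l ys ! j) * perK KK (NS k xs) (dl j (NS l ys)))"
    by (simp add: perK_Cons_row NS_def q_def)
  also have "\<dots> = (\<Sum>j<l. cnj (pair g x) * perK KK (NS k xs) (NS (l - 1) ys)) +
     (\<Sum>i<q. ip x (ys ! i) * perK KK (NS k xs) (NS l (dl i ys)))"
    unfolding sum_lessThan_add
  proof (intro arg_cong2[where f="(+)"] sum.cong refl)
    fix j assume j: "j \<in> {..<l}"
    have "mset (dl j (NS l ys)) = mset (NS (l - 1) ys)"
      using j by (simp add: mset_dl NS_def nth_append) (cases l, auto)
    hence "perK KK (NS k xs) (dl j (NS l ys)) = perK KK (NS k xs) (NS (l - 1) ys)"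
      by (rule perK_cols_mset)
    moreover have "NS l ys ! j = None" using j by (simp add: NS_def nth_append)
    ultimately show "KK (Some x) (NS l ys ! j) * perK KK (NS k xs) (dl j (NS l ys)) =
          cnj (pair g x) * perK KK (NS k xs) (NS (l - 1) ys)"
      by (simp add: KK_def)
  next
    fix i assume i: "i \<in> {..<q}"
    show "KK (Some x) (NS l ys ! (l + i)) * perK KK (NS k xs) (dl (l + i) (NS l ys)) =
          ip x (ys ! i) * perK KK (NS k xs) (NS l (dl i ys))"
      using i by (simp add: NS_def nth_append KK_def dl_replicate_append dl_map q_def)
  qed
  finally have eq: "perK KK (NS k (x # xs)) (NS l ys) = of_nat l * cnj (pair g x) * perK KK (NS k xs) (NS (l - 1) ys) +
     (\<Sum>i<q. ip x (ys ! i) * perK KK (NS k xs) (NS l (dl i ys)))" by simp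
  have lhs: "Tz ip g z (Suc n) (x # xs) ys = perK KK (NS k (x # xs)) (NS l ys) / (fact k * fact l)"
    using True by (simp add: Tz_def k_def l_def KK_def)
  have t1: "of_nat l * cnj (pair g x) * perK KK (NS k xs) (NS (l - 1) ys) / (fact k * fact l) = cnj (pair g x) * Tz ip g z n xs ys"
  proof (cases "l = 0")
    case True
    thus ?thesis using \<open>l + q = Suc n\<close> by (simp add: Tz_def q_def)
  next
    case False
    hence "length ys \<le> n" "l - 1 = n - length ys" using l_def by auto
    moreover have "(fact l :: complex) = of_nat l * fact (l - 1)" using False fact_reduce[of l]
      by simp
    ultimately show ?thesis using True False by (simp add: Tz_def k_def KK_def field_simps)
  qed
  have t2: "ip x (ys ! i) * perK KK (NS k xs) (NS l (dl i ys)) / (fact k * fact l) = ip x (ys ! i) * Tz ip g z n xs (dl i ys)"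
    if "i < q" for i
    using that True lq by (auto simp: Tz_def k_def KK_def q_def l_def)
  show ?thesis
    unfolding lhs eq add_divide_distrib t1 sum_divide_distrib
    using t2 by (simp add: q_def)
next
  case False
  hence "Tz ip g z (Suc n) (x # xs) ys = 0" "Tz ip g z n xs ys = 0"
    "\<And>j. j < length ys \<Longrightarrow> Tz ip g z n xs (dl j ys) = 0"
    by (auto simp: Tz_def)
  thus ?thesis by simp
qed

lemma Tz_0_Cons: "Tz ip g z 0 (x # xs) ys = 0"
  by (simp add: Tz_def)

lemma Tz_sums: "(\<lambda>n. Tz ip g z n xs ys) sums (exp z * Qrec ip g xs ys)"
proof (induction xs arbitrary: ys)
  case Nil
  define q where "q = length ys"
  have "(\<lambda>i. z ^ i / fact i * prod_list (map (pair g) ys)) sums (exp z * prod_list (map (pair g) ys))"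
    using sums_mult[OF exp_converges[of z], of "prod_list (map (pair g) ys)"] by (simp add: scaleR_conv_of_real divide_inverse mult_ac)
  hence "(\<lambda>i. Tz ip g z (i + q) [] ys) sums (exp z * Qrec ip g [] ys)"
    by (simp add: Tz_Nil q_def)
  thus ?case
    by (subst (asm) sums_zero_iff_shift) (auto simp: Tz_Nil q_def)
next
  case (Cons x xs)
  have "(\<lambda>n. Tz ip g z (Suc n) (x # xs) ys) sums
     (cnj (pair g x) * (exp z * Qrec ip g xs ys) + (\<Sum>j<length ys. ip x (ys ! j) * (exp z * Qrec ip g xs (dl j ys))))"
    unfolding Tz_Cons
    by (intro sums_add sums_mult sums_sum Cons.IH)
  hence "(\<lambda>n. Tz ip g z n (x # xs) ys) sums
     (cnj (pair g x) * (exp z * Qrec ip g xs ys) + (\<Sum>j<length ys. ip x (ys ! j) * (exp z * Qrec ip g xs (dl j ys))))"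
    by (subst (asm) sums_Suc_iff) (simp add: Tz_0_Cons)
  thus ?case by (simp add: sum_distrib_left algebra_simps)
qed

lemma Tz_vanish: "length xs + length ys < n \<Longrightarrow> Tz ip g 0 n xs ys = 0"
proof (induction xs arbitrary: n ys)
  case Nil
  thus ?case by (simp add: Tz_Nil)
next
  case (Cons x xs)
  then obtain m where n: "n = Suc m" by (cases n) auto
  have "Tz ip g 0 m xs ys = 0" using Cons by (intro Cons.IH) (auto simp: n)
  moreover have "Tz ip g 0 m xs (dl j ys) = 0" if "j < length ys" for j
    using Cons that by (intro Cons.IH) (auto simp: n)
  ultimately show ?case by (simp add: n Tz_Cons)
qed

definition nf :: "nat \<Rightarrow> complex" where
  "nf p = complex_of_real (sqrt (fact p))"

lemma nf_nonzero[simp]: "nf p \<noteq> 0"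
  by (simp add: nf_def)

lemma nf_sq: "nf p * nf p = fact p"
  by (simp add: nf_def flip: of_real_mult)

definition Bi :: "('h \<Rightarrow> 'h \<Rightarrow> complex) \<Rightarrow> ('h \<Rightarrow> complex) \<Rightarrow> 'h fvec \<Rightarrow> 'h fvec \<Rightarrow> nat \<Rightarrow> nat \<Rightarrow> complex" where
  "Bi ip g A B r c = (\<Sum>t\<in>#A. \<Sum>u\<in>#B. cnj (fst t) * fst u *
      perK (kz ip g 0) (NS r (snd t)) (NS c (snd u)) / (nf (length (snd t)) * nf (length (snd u))))"

lemma sum_mset_sum_mset_image:
  "(\<Sum>s\<in>#sum_mset (image_mset F A). f s) = (\<Sum>t\<in>#A. \<Sum>s\<in>#F t. f s)"
  by (induction A) auto

lemma rest_mset: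
  assumes "\<sigma> permutes {..<Suc m}" "length xs = Suc m"
  shows "mset (map (\<lambda>i. xs ! \<sigma> i) [1..<Suc m]) = mset (dl (\<sigma> 0) xs)"
proof -
  have "permute_list \<sigma> xs = xs ! \<sigma> 0 # map (\<lambda>i. xs ! \<sigma> i) [1..<Suc m]"
    unfolding permute_list_def assms(2) by (simp add: upt_rec)
  moreover have "mset (permute_list \<sigma> xs) = mset xs"
    using mset_permute_list[of \<sigma> xs] assms by simp
  ultimately have "mset xs = add_mset (xs ! \<sigma> 0) (mset (map (\<lambda>i. xs ! \<sigma> i) [1..<Suc m]))"
    by simp
  moreover have "\<sigma> 0 < length xs" using assms permutes_in_image by fastforce
  ultimately show ?thesis by (simp add: mset_dl)
qed

lemma const_eq:
  "complex_of_real (sqrt (real (Suc m)) / real (fact (Suc m))) * fact m / nf m = 1 / nf (Suc m)"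
proof -
  define sm where "sm = sqrt (real (Suc m))"
  define F where "F = (fact m :: real)"
  define sF where "sF = sqrt F"
  have a: "real (Suc m) = sm * sm" by (simp add: sm_def)
  have pos: "sm > 0" "F > 0" "sF > 0" by (auto simp: sm_def F_def sF_def)
  have e1: "sqrt (fact (Suc m) :: real) = sm * sF"
    by (simp add: sm_def sF_def F_def real_sqrt_mult)
  have e2: "real (fact (Suc m)) = sm * sm * F"
    by (simp add: F_def algebra_simps flip: a)
  have r: "sqrt (real (Suc m)) / real (fact (Suc m)) * F / sF = 1 / sqrt (fact (Suc m))"
    unfolding e1 e2 sm_def[symmetric] using pos by (simp add: field_simps)
  have "complex_of_real (sqrt (real (Suc m)) / real (fact (Suc m))) * fact m / nf m =
        complex_of_real (sqrt (real (Suc m)) / real (fact (Suc m)) * F / sF)"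
    by (simp add: nf_def F_def sF_def)
  also have "\<dots> = 1 / nf (Suc m)" unfolding r by (simp add: nf_def)
  finally show ?thesis .
qed

lemma mset_NS_cong: "mset A = mset B \<Longrightarrow> mset (NS r A) = mset (NS r B)"
  by (simp add: NS_def)

lemma ann_left_gen:
  assumes K1: "\<And>x. K (Some x) None = cnj (pair g x)" and K0: "K None None = 0"
  shows "(\<Sum>s\<in>#ann_term g (a, xs). cnj (fst s) * perK K (NS r (snd s)) cols / nf (length (snd s))) =
   cnj a * perK K (NS r xs) (None # cols) / nf (length xs)"
proof (cases xs rule: rev_exhaust)
  case Nil
  have "perK K (NS r []) (None # cols) = 0"
    by (simp add: perK_Cons_col NS_def K0)
  thus ?thesis by (simp add: ann_term_def Nil)
next
  case (snoc ys y)
  define m where "m = length ys"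
  have lx: "length xs = Suc m" by (simp add: snoc m_def)
  define G where "G i = cnj (pair g (xs ! i)) * perK K (NS r (dl i xs)) cols" for i
  define P where "P = {\<sigma>. \<sigma> permutes {..<Suc m}}"
  define F where "F \<sigma> = (a * complex_of_real (sqrt (real (Suc m)) / real (fact (Suc m))) * pair g (xs ! \<sigma> 0),
                   map (\<lambda>i. xs ! \<sigma> i) [1..<Suc m])" for \<sigma>
  have at: "ann_term g (a, xs) = image_mset F (mset_set P)"
    by (simp only: ann_term_def Let_def fst_conv snd_conv lx F_def[abs_def] P_def nat.distinct(2) if_False)
  have "(\<Sum>s\<in>#ann_term g (a, xs). cnj (fst s) * perK K (NS r (snd s)) cols / nf (length (snd s))) =
     (\<Sum>\<sigma>\<in>P. cnj (fst (F \<sigma>)) * perK K (NS r (snd (F \<sigma>))) cols / nf (length (snd (F \<sigma>))))"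
    unfolding at sum_unfold_sum_mset by (simp add: multiset.map_comp comp_def)
  also have "\<dots> = (\<Sum>\<sigma>\<in>P. cnj a * complex_of_real (sqrt (real (Suc m)) / real (fact (Suc m))) / nf m * G (\<sigma> 0))"
  proof (intro sum.cong refl)
    fix \<sigma> assume "\<sigma> \<in> P"
    hence \<sigma>: "\<sigma> permutes {..<Suc m}" by (simp add: P_def)
    have sF: "snd (F \<sigma>) = map (\<lambda>i. xs ! \<sigma> i) [1..<Suc m]" by (simp only: F_def snd_conv)
    have "mset (NS r (snd (F \<sigma>))) = mset (NS r (dl (\<sigma> 0) xs))"
      unfolding sF by (rule mset_NS_cong[OF rest_mset[OF \<sigma> lx]])
    hence "perK K (NS r (snd (F \<sigma>))) cols = perK K (NS r (dl (\<sigma> 0) xs)) cols"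
      by (rule perK_rows_mset)
    moreover have lF: "length (snd (F \<sigma>)) = m" by (simp add: sF)
    ultimately show "cnj (fst (F \<sigma>)) * perK K (NS r (snd (F \<sigma>))) cols / nf (length (snd (F \<sigma>))) =
      cnj a * complex_of_real (sqrt (real (Suc m)) / real (fact (Suc m))) / nf m * G (\<sigma> 0)"
      unfolding lF by (simp add: F_def G_def)
  qed
  also have "\<dots> = cnj a * complex_of_real (sqrt (real (Suc m)) / real (fact (Suc m))) / nf m * (fact m * (\<Sum>i<Suc m. G i))"
    by (subst sum_distrib_left[symmetric]) (simp only: P_def sum_perm_first)
  also have "(\<Sum>i<Suc m. G i) = perK K (NS r xs) (None # cols)"
  proof -
    have "perK K (NS r xs) (None # cols) = (\<Sum>j<r + Suc m. K (NS r xs ! j) None * perK K (dl j (NS r xs)) cols)"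
      by (simp add: perK_Cons_col NS_def lx)
    also have "\<dots> = (\<Sum>i<Suc m. G i)"
      unfolding sum_lessThan_add
      by (simp add: NS_def K0 K1 G_def nth_append dl_replicate_append dl_map lx)
    finally show ?thesis by simp
  qed
  also have "cnj a * complex_of_real (sqrt (real (Suc m)) / real (fact (Suc m))) / nf m * (fact m * perK K (NS r xs) (None # cols))
     = cnj a * (complex_of_real (sqrt (real (Suc m)) / real (fact (Suc m))) * fact m / nf m) * perK K (NS r xs) (None # cols)"
    by (simp add: field_simps)
  also have "\<dots> = cnj a * perK K (NS r xs) (None # cols) / nf (length xs)"
    unfolding const_eq lx by simp
  finally show ?thesis .
qed


lemma cnj_per_f: "cnj (per_f n A) = per_f n (\<lambda>r c. cnj (A r c))"
  by (simp add: per_f_def)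

lemma perK_cnj: "cnj (perK K as bs) = perK (\<lambda>b a. cnj (K a b)) bs as"
  by (subst perK_transpose) (simp add: perK_def cnj_per_f)

lemma cnj_sum_mset: "cnj (\<Sum>s\<in>#M. f s) = (\<Sum>s\<in>#M. cnj (f s))"
  by (induction M) auto

lemma cnj_nf[simp]: "cnj (nf p) = nf p"
  by (simp add: nf_def)

lemma ann_right_gen:
  assumes K1: "\<And>y. K None (Some y) = pair g y" and K0: "K None None = 0"
  shows "(\<Sum>s\<in>#ann_term g (b, ys). fst s * perK K rws (NS c (snd s)) / nf (length (snd s))) =
   b * perK K (None # rws) (NS c ys) / nf (length ys)"
proof -
  define K' where "K' = (\<lambda>b a. cnj (K a b))"
  have "(\<Sum>s\<in>#ann_term g (b, ys). cnj (fst s) * perK K' (NS c (snd s)) rws / nf (length (snd s))) =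
     cnj b * perK K' (NS c ys) (None # rws) / nf (length ys)"
    by (rule ann_left_gen) (auto simp: K'_def K1 K0)
  hence "cnj (\<Sum>s\<in>#ann_term g (b, ys). cnj (fst s) * perK K' (NS c (snd s)) rws / nf (length (snd s))) =
     cnj (cnj b * perK K' (NS c ys) (None # rws) / nf (length ys))" by simp
  moreover have "\<And>X Y. perK K' X Y = cnj (perK K Y X)"
    by (simp add: perK_cnj K'_def)
  ultimately show ?thesis by (simp add: cnj_sum_mset)
qed

lemma ann_left:
  "(\<Sum>s\<in>#ann_term g (a, xs). cnj (fst s) * perK (kz ip g 0) (NS r (snd s)) cols / nf (length (snd s))) =
   cnj a * perK (kz ip g 0) (NS r xs) (None # cols) / nf (length xs)"
  by (rule ann_left_gen) auto

lemma ann_right: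
  "(\<Sum>s\<in>#ann_term g (b, ys). fst s * perK (kz ip g 0) rws (NS c (snd s)) / nf (length (snd s))) =
   b * perK (kz ip g 0) (None # rws) (NS c ys) / nf (length ys)"
  by (rule ann_right_gen) auto

lemma ann_left':
  "(\<Sum>s\<in>#ann_term g t. cnj (fst s) * perK (kz ip g 0) (NS r (snd s)) cols / nf (length (snd s))) =
   cnj (fst t) * perK (kz ip g 0) (NS (r) (snd t)) (None # cols) / nf (length (snd t))"
  using ann_left[where a="fst t" and xs="snd t"] by simp

lemma ann_right':
  "(\<Sum>s\<in>#ann_term g t. fst s * perK (kz ip g 0) rws (NS c (snd s)) / nf (length (snd s))) =
   fst t * perK (kz ip g 0) (None # rws) (NS c (snd t)) / nf (length (snd t))"
  using ann_right[where b="fst t" and ys="snd t"] by simp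

lemma NS_Suc: "None # NS r xs = NS (Suc r) xs"
  by (simp add: NS_def)

lemma Bi_ann_left: "Bi ip g (ann g A) B r c = Bi ip g A B r (Suc c)"
proof -
  have "Bi ip g (ann g A) B r c = (\<Sum>t\<in>#A. \<Sum>s\<in>#ann_term g t. \<Sum>u\<in>#B. cnj (fst s) * fst u *
      perK (kz ip g 0) (NS r (snd s)) (NS c (snd u)) / (nf (length (snd s)) * nf (length (snd u))))"
    unfolding Bi_def ann_def by (simp only: sum_mset_sum_mset_image)
  also have "\<dots> = (\<Sum>t\<in>#A. \<Sum>u\<in>#B. fst u / nf (length (snd u)) * (\<Sum>s\<in>#ann_term g t. cnj (fst s) *
      perK (kz ip g 0) (NS r (snd s)) (NS c (snd u)) / nf (length (snd s))))"
  proof -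
    have eq: "(\<Sum>s\<in>#ann_term g t. \<Sum>u\<in>#B. cnj (fst s) * fst u *
      perK (kz ip g 0) (NS r (snd s)) (NS c (snd u)) / (nf (length (snd s)) * nf (length (snd u)))) =
      (\<Sum>u\<in>#B. fst u / nf (length (snd u)) * (\<Sum>s\<in>#ann_term g t. cnj (fst s) *
      perK (kz ip g 0) (NS r (snd s)) (NS c (snd u)) / nf (length (snd s))))" for t
      by (subst sum_mset.swap) (simp add: sum_mset_distrib_left mult_ac)
    show ?thesis by (simp only: eq)
  qed
  also have "\<dots> = Bi ip g A B r (Suc c)"
    unfolding Bi_def ann_left' NS_Suc by (simp add: mult_ac)
  finally show ?thesis .
qed

lemma Bi_ann_right: "Bi ip g A (ann g B) r c = Bi ip g A B (Suc r) c"
proof -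
  have "Bi ip g A (ann g B) r c = (\<Sum>t\<in>#A. \<Sum>u\<in>#B. \<Sum>s\<in>#ann_term g u. cnj (fst t) * fst s *
      perK (kz ip g 0) (NS r (snd t)) (NS c (snd s)) / (nf (length (snd t)) * nf (length (snd s))))"
    unfolding Bi_def ann_def by (simp only: sum_mset_sum_mset_image)
  also have "\<dots> = (\<Sum>t\<in>#A. \<Sum>u\<in>#B. cnj (fst t) / nf (length (snd t)) * (\<Sum>s\<in>#ann_term g u. fst s *
      perK (kz ip g 0) (NS r (snd t)) (NS c (snd s)) / nf (length (snd s))))"
    by (simp add: sum_mset_distrib_left mult_ac)
  also have "\<dots> = Bi ip g A B (Suc r) c"
    unfolding Bi_def ann_right' NS_Suc by (simp add: mult_ac)
  finally show ?thesis .
qed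

lemma Bi_funpow: "Bi ip g ((ann g ^^ k) A) ((ann g ^^ l) B) r c = Bi ip g A B (r + l) (c + k)"
proof -
  have L: "Bi ip g ((ann g ^^ k) A) B' r c = Bi ip g A B' r (c + k)" for B' r c
    by (induction k arbitrary: c) (simp_all add: Bi_ann_left)
  have R: "Bi ip g A ((ann g ^^ l) B) r c = Bi ip g A B (r + l) c" for r c
    by (induction l arbitrary: r) (simp_all add: Bi_ann_right)
  show ?thesis by (simp add: L R)
qed

lemma fin_ip_plus_left: "fin_ip ip (A + A') B = fin_ip ip A B + fin_ip ip A' B"
  by (simp add: fin_ip_def)

lemma fin_ip_plus_right: "fin_ip ip A (B + B') = fin_ip ip A B + fin_ip ip A B'"
  by (simp add: fin_ip_def sum_mset.distrib)

lemma fin_ip_zero_left[simp]: "fin_ip ip {#} B = 0"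
  by (simp add: fin_ip_def)

lemma fin_ip_zero_right[simp]: "fin_ip ip A {#} = 0"
  by (simp add: fin_ip_def)

lemma fin_ip_sum_left: "fin_ip ip (\<Sum>k\<in>K. F k) B = (\<Sum>k\<in>K. fin_ip ip (F k) B)"
  by (induction K rule: infinite_finite_induct) (auto simp: fin_ip_plus_left)

lemma fin_ip_sum_right: "fin_ip ip A (\<Sum>k\<in>K. F k) = (\<Sum>k\<in>K. fin_ip ip A (F k))"
  by (induction K rule: infinite_finite_induct) (auto simp: fin_ip_plus_right)

lemma fin_ip_scale_left: "fin_ip ip (scaleF a A) B = cnj a * fin_ip ip A B"
  by (induction A) (auto simp: fin_ip_def scaleF_def sum_mset_distrib_left mult_ac distrib_left)

lemma fin_ip_scale_right: "fin_ip ip A (scaleF b B) = b * fin_ip ip A B"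
proof (induction A)
  case empty thus ?case by simp
next
  case (add t A)
  have "(\<Sum>u\<in>#scaleF b B. cnj (fst t) * fst u * sym_ip ip (snd t) (snd u)) =
        b * (\<Sum>u\<in>#B. cnj (fst t) * fst u * sym_ip ip (snd t) (snd u))"
    by (induction B) (auto simp: scaleF_def algebra_simps)
  thus ?case using add by (simp add: fin_ip_def distrib_left)
qed

lemma sym_ip_perK:
  "sym_ip ip xs ys = (if length xs = length ys then perK ip xs ys / fact (length xs) else 0)"
proof (cases "length xs = length ys")
  case True
  define n where "n = length xs"
  have inner: "(\<Sum>\<tau>\<in>{\<tau>. \<tau> permutes {..<n}}. \<Prod>i<n. ip (xs ! \<sigma> i) (ys ! \<tau> i)) = perK ip xs ys"
    if "\<sigma> \<in> {\<sigma>. \<sigma> permutes {..<n}}" for \<sigma>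
  proof -
    have "(\<Sum>\<tau>\<in>{\<tau>. \<tau> permutes {..<n}}. \<Prod>i<n. ip (xs ! \<sigma> i) (ys ! \<tau> i)) =
          per_f n (\<lambda>r c. (\<lambda>r c. ip (xs ! r) (ys ! c)) (\<sigma> r) c)"
      by (simp add: per_f_def)
    also have "\<dots> = per_f n (\<lambda>r c. ip (xs ! r) (ys ! c))"
      using that by (intro per_f_row_perm) simp
    finally show ?thesis using True by (simp add: perK_def n_def)
  qed
  have "sym_ip ip xs ys = (1 / of_nat (fact n))^2 * (\<Sum>\<sigma>\<in>{\<sigma>. \<sigma> permutes {..<n}}. perK ip xs ys)"
    unfolding sym_ip_def using True inner by (simp add: n_def Let_def)
  also have "\<dots> = perK ip xs ys / fact n"
    by (simp add: card_permutations power2_eq_square field_simps)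
  finally show ?thesis using True by (simp add: n_def)
qed (simp add: sym_ip_def)

lemma perK_map: "perK K (map f as) (map h bs) = perK (\<lambda>a b. K (f a) (h b)) as bs"
  by (auto simp: perK_def intro!: per_f_cong)

lemma sym_ip_Bi_term:
  "sym_ip ip xs ys = perK (kz ip g 0) (NS 0 xs) (NS 0 ys) / (nf (length xs) * nf (length ys))"
proof -
  have "perK (kz ip g 0) (NS 0 xs) (NS 0 ys) = perK ip xs ys"
    by (simp add: NS_def perK_map)
  thus ?thesis by (simp add: sym_ip_perK nf_sq perK_def)
qed

lemma fin_ip_Bi: "fin_ip ip A B = Bi ip g A B 0 0"
  unfolding fin_ip_def Bi_def by (simp add: sym_ip_Bi_term[of ip _ _ g] mult_ac)

lemma fin_ip_funpow:
  "fin_ip ip ((ann g ^^ k) A) ((ann g ^^ l) B) = Bi ip g A B l k"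
  by (simp add: fin_ip_Bi[where g=g] Bi_funpow)

lemma max_len_ge: "t \<in># \<Psi> \<Longrightarrow> length (snd t) \<le> max_len \<Psi>"
  unfolding max_len_def by (rule Max_ge) auto

lemma sum_sum_mset_swap: "(\<Sum>k\<in>K. \<Sum>t\<in>#M. f k t) = (\<Sum>t\<in>#M. \<Sum>k\<in>K. f k t)"
  by (induction M) (auto simp: sum.distrib)

lemma inner_R:
  assumes "length xs \<le> A" "length ys \<le> B"
  shows "(\<Sum>k\<le>A. \<Sum>l\<le>B. 1 / (fact k * fact l) * perK (kz ip g 0) (NS l xs) (NS k ys)) = Qrec ip g xs ys"
proof -
  define p where "p = length xs"
  define q where "q = length ys"
  define V where "V l = Tz ip g 0 (l + p) xs ys" for l
  have trm: "1 / (fact k * fact l) * perK (kz ip g 0) (NS l xs) (NS k ys) = (if l + p = k + q then V l else 0)" for k l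
  proof (cases "l + p = k + q")
    case True
    hence "l + p - p = l" "l + p - q = k" "p \<le> l + p" "q \<le> l + p" by auto
    thus ?thesis using True by (simp add: V_def Tz_def p_def[symmetric] q_def[symmetric] mult_ac)
  next
    case False
    thus ?thesis by (simp add: perK_def NS_def p_def q_def)
  qed
  have inner: "(\<Sum>k\<le>A. if l + p = k + q then V l else 0) = (if q \<le> l + p \<and> l + p - q \<le> A then V l else 0)" for l
  proof (cases "q \<le> l + p \<and> l + p - q \<le> A")
    case True
    have "(\<Sum>k\<le>A. if l + p = k + q then V l else 0) = (\<Sum>k\<le>A. if k = l + p - q then V l else 0)"
      using True by (intro sum.cong) auto
    thus ?thesis using True by simp
  next
    case False
    thus ?thesis by (intro trans[OF sum.neutral]) auto
  qed
  have van: "V l = 0" if "\<not> (q \<le> l + p \<and> l + p - q \<le> A)" for l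
  proof (cases "q \<le> l + p")
    case False thus ?thesis by (simp add: V_def Tz_def q_def)
  next
    case True
    hence "length xs + length ys < l + p" using that assms p_def q_def by auto
    thus ?thesis unfolding V_def by (rule Tz_vanish)
  qed
  have "(\<Sum>k\<le>A. \<Sum>l\<le>B. 1 / (fact k * fact l) * perK (kz ip g 0) (NS l xs) (NS k ys)) =
        (\<Sum>k\<le>A. \<Sum>l\<le>B. if l + p = k + q then V l else 0)"
    unfolding trm ..
  also have "\<dots> = (\<Sum>l\<le>B. \<Sum>k\<le>A. if l + p = k + q then V l else 0)"
    by (rule sum.swap)
  also have "\<dots> = (\<Sum>l\<le>B. if q \<le> l + p \<and> l + p - q \<le> A then V l else 0)"
    unfolding inner ..
  also have "\<dots> = (\<Sum>l\<le>B. V l)"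
    using van by (intro sum.cong) auto
  finally have "(\<Sum>k\<le>A. \<Sum>l\<le>B. 1 / (fact k * fact l) * perK (kz ip g 0) (NS l xs) (NS k ys)) = (\<Sum>l\<le>B. V l)" .
  moreover have "(\<lambda>l. V l) sums (\<Sum>l\<le>B. V l)"
  proof (rule sums_finite)
    fix l assume "l \<notin> {..B}"
    hence "length xs + length ys < l + p" using assms p_def by auto
    thus "V l = 0" unfolding V_def by (rule Tz_vanish)
  qed simp
  hence "(\<lambda>n. Tz ip g 0 n xs ys) sums (\<Sum>l\<le>B. V l)"
    unfolding V_def by (subst (asm) sums_zero_iff_shift) (auto simp: Tz_def p_def)
  moreover have "(\<lambda>n. Tz ip g 0 n xs ys) sums (Qrec ip g xs ys)"
    using Tz_sums[of ip g 0 xs ys] by simp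
  ultimately show ?thesis using sums_unique2 by metis
qed

definition CQ :: "('h \<Rightarrow> 'h \<Rightarrow> complex) \<Rightarrow> ('h \<Rightarrow> complex) \<Rightarrow> 'h fvec \<Rightarrow> 'h fvec \<Rightarrow> complex" where
  "CQ ip g \<Psi> \<Phi> = (\<Sum>t\<in>#\<Psi>. \<Sum>u\<in>#\<Phi>. cnj (fst t) * fst u / (nf (length (snd t)) * nf (length (snd u))) *
      Qrec ip g (snd t) (snd u))"

lemma g_ip_formula: "g_ip ip g \<Psi> \<Phi> = CQ ip g \<Psi> \<Phi>"
proof -
  have "g_ip ip g \<Psi> \<Phi> = (\<Sum>k\<le>max_len \<Psi>. \<Sum>l\<le>max_len \<Phi>. 1 / (fact k * fact l) * Bi ip g \<Psi> \<Phi> l k)"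
    unfolding g_ip_def exp_ann_def fin_ip_sum_left fin_ip_sum_right fin_ip_scale_left fin_ip_scale_right fin_ip_funpow
    apply (simp add: sum_divide_distrib)
    apply (subst sum.swap)
    apply (simp add: mult_ac)
    done
  also have "\<dots> = (\<Sum>t\<in>#\<Psi>. \<Sum>u\<in>#\<Phi>. cnj (fst t) * fst u / (nf (length (snd t)) * nf (length (snd u))) *
      (\<Sum>k\<le>max_len \<Psi>. \<Sum>l\<le>max_len \<Phi>. 1 / (fact k * fact l) * perK (kz ip g 0) (NS l (snd t)) (NS k (snd u))))"
    unfolding Bi_def sum_distrib_left sum_sum_mset_swap sum_mset_distrib_left
    by (intro arg_cong[where f=sum_mset] image_mset_cong sum.cong refl) (simp add: mult_ac)
  also have "\<dots> = CQ ip g \<Psi> \<Phi>"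
    unfolding CQ_def
    by (intro arg_cong[where f=sum_mset] image_mset_cong arg_cong2[where f="(*)"] refl inner_R max_len_ge)
  finally show ?thesis .
qed

definition gh :: "('h \<Rightarrow> 'h \<Rightarrow> complex) \<Rightarrow> 'h \<Rightarrow> 'h \<Rightarrow> complex" where
  "gh ip h = (\<lambda>x. cnj (ip h x))"

lemma pair_gh[simp]: "pair (gh ip h) x = ip h x"
  by (simp add: pair_def gh_def)

lemma cre_add: "cre h (A + B) = cre h A + cre h B"
  by (simp add: cre_def)

lemma cre_pow_add: "(cre h ^^ k) (A + B) = (cre h ^^ k) A + (cre h ^^ k) B"
  by (induction k) (simp_all add: cre_add)

lemma cre_pow_empty[simp]: "(cre h ^^ k) {#} = {#}"
  by (induction k) (simp_all add: cre_def)

lemma exp_cre_comp_add: "exp_cre_comp h n (A + B) = exp_cre_comp h n A + exp_cre_comp h n B"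
  by (simp add: exp_cre_comp_def compF_def cre_pow_add scaleF_def sum.distrib)

lemma exp_cre_comp_empty[simp]: "exp_cre_comp h n {#} = {#}"
  by (simp add: exp_cre_comp_def compF_def scaleF_def)

lemma exp_cre_comp_sum: "exp_cre_comp h n \<Psi> = (\<Sum>t\<in>#\<Psi>. exp_cre_comp h n {#t#})"
proof (induction \<Psi>)
  case empty thus ?case by simp
next
  case (add t A)
  have "exp_cre_comp h n (add_mset t A) = exp_cre_comp h n ({#t#} + A)" by simp
  thus ?case unfolding exp_cre_comp_add using add by simp
qed

lemma cre_single: "cre h {#(c, xs)#} = {#(complex_of_real (sqrt (real (length xs + 1))) * c, h # xs)#}"
  by (simp add: cre_def)

lemma cre_pow_single:
  "(cre h ^^ k) {#(c, xs)#} =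
     {#(c * complex_of_real (sqrt (fact (length xs + k) / fact (length xs))), replicate k h @ xs)#}"
proof (induction k)
  case 0 thus ?case by simp
next
  case (Suc k)
  have e: "sqrt (real (length xs + k + 1)) * sqrt (fact (length xs + k) / fact (length xs)) =
           sqrt (fact (length xs + Suc k) / fact (length xs) :: real)"
  proof -
    have "real (length xs + k + 1) * (fact (length xs + k) / fact (length xs)) = fact (length xs + Suc k) / fact (length xs)"
      by (simp add: algebra_simps)
    thus ?thesis by (simp add: real_sqrt_mult[symmetric])
  qed
  have "(cre h ^^ Suc k) {#(c, xs)#} = cre h ((cre h ^^ k) {#(c, xs)#})" by simp
  also have "\<dots> = cre h {#(c * complex_of_real (sqrt (fact (length xs + k) / fact (length xs))), replicate k h @ xs)#}"
    by (simp only: Suc.IH)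
  also have "\<dots> = {#(complex_of_real (sqrt (real (length xs + k + 1))) * (c * complex_of_real (sqrt (fact (length xs + k) / fact (length xs)))), replicate (Suc k) h @ xs)#}"
    by (simp only: cre_single) (simp add: add_ac)
  also have "\<dots> = {#(c * complex_of_real (sqrt (real (length xs + k + 1)) * sqrt (fact (length xs + k) / fact (length xs))), replicate (Suc k) h @ xs)#}"
    by (simp add: mult_ac)
  also have "\<dots> = {#(c * complex_of_real (sqrt (fact (length xs + Suc k) / fact (length xs))), replicate (Suc k) h @ xs)#}"
    by (simp only: e)
  finally show ?case .
qed

lemma exp_cre_comp_single:
  "exp_cre_comp h n {#(c, xs)#} = (if length xs \<le> n then
     {#(c * complex_of_real (sqrt (fact n / fact (length xs))) / fact (n - length xs), replicate (n - length xs) h @ xs)#}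
   else {#})"
proof -
  define p where "p = length xs"
  have "exp_cre_comp h n {#(c, xs)#} =
     (\<Sum>k\<le>n. if k = n - p \<and> p \<le> n then scaleF (1 / of_nat (fact k)) ((cre h ^^ k) {#(c, xs)#}) else {#})"
    unfolding exp_cre_comp_def compF_def
    by (intro sum.cong refl) (auto simp: p_def scaleF_def)
  also have "\<dots> = (if p \<le> n then scaleF (1 / of_nat (fact (n - p))) ((cre h ^^ (n - p)) {#(c, xs)#}) else {#})"
    by (cases "p \<le> n") (simp_all add: sum.delta)
  finally show ?thesis
    by (simp add: p_def cre_pow_single scaleF_def mult_ac)
qed

lemma fin_ip_summ_left: "fin_ip ip (\<Sum>t\<in>#M. F t) B = (\<Sum>t\<in>#M. fin_ip ip (F t) B)"
  by (induction M) (simp_all add: fin_ip_plus_left)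

lemma fin_ip_summ_right: "fin_ip ip A (\<Sum>t\<in>#M. F t) = (\<Sum>t\<in>#M. fin_ip ip A (F t))"
  by (induction M) (simp_all add: fin_ip_plus_right)

lemma nf_0[simp]: "nf 0 = 1" by (simp add: nf_def)

lemma scal_id:
  assumes "p \<le> n" "q \<le> n"
  shows "complex_of_real (sqrt (fact n / fact p)) * complex_of_real (sqrt (fact n / fact q)) / fact n = 1 / (nf p * nf q)"
proof -
  have r: "sqrt (fact n / fact p) * sqrt (fact n / fact q) / fact n = 1 / (sqrt (fact p) * sqrt (fact q) :: real)"
  proof -
    have "sqrt (fact n / fact p) * sqrt (fact n / fact q) = sqrt (fact n) * sqrt (fact n) / (sqrt (fact p) * sqrt (fact q) :: real)"
      by (simp add: real_sqrt_divide)
    also have "sqrt (fact n) * sqrt (fact n) = (fact n :: real)" by simp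
    finally show ?thesis by simp
  qed
  have "complex_of_real (sqrt (fact n / fact p)) * complex_of_real (sqrt (fact n / fact q)) / fact n =
        complex_of_real (sqrt (fact n / fact p) * sqrt (fact n / fact q) / fact n)"
    by simp
  also have "\<dots> = 1 / (nf p * nf q)" unfolding r by (simp add: nf_def)
  finally show ?thesis .
qed

lemma kz_gh:
  assumes "\<forall>x y. ip y x = cnj (ip x y)"
  shows "kz ip (gh ip h) (ip h h) a b = ip (case_option h id a) (case_option h id b)"
proof (cases a)
  case None
  thus ?thesis by (cases b) (simp_all add: pair_def gh_def)
next
  case (Some x)
  have "ip x h = cnj (ip h x)" using assms by blast
  thus ?thesis using Some by (cases b) (simp_all add: pair_def gh_def)
qed

lemma map_un_NS: "map (case_option h id) (NS k xs) = replicate k h @ xs"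
  by (simp add: NS_def comp_def)

lemma fin_ip_ecc_single:
  assumes cs: "\<forall>x y. ip y x = cnj (ip x y)"
  shows "fin_ip ip (exp_cre_comp h n {#t#}) (exp_cre_comp h n {#u#}) =
     cnj (fst t) * fst u / (nf (length (snd t)) * nf (length (snd u))) * Tz ip (gh ip h) (ip h h) n (snd t) (snd u)"
proof -
  obtain c xs where t: "t = (c, xs)" by (cases t)
  obtain d ys where u: "u = (d, ys)" by (cases u)
  show ?thesis
  proof (cases "length xs \<le> n \<and> length ys \<le> n")
    case True
    define p where "p = length xs"
    define q where "q = length ys"
    have pq: "p \<le> n" "q \<le> n" using True p_def q_def by auto
    have P: "perK ip (replicate (n - p) h @ xs) (replicate (n - q) h @ ys) =
             perK (kz ip (gh ip h) (ip h h)) (NS (n - p) xs) (NS (n - q) ys)"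
      unfolding map_un_NS[symmetric] perK_map kz_gh[OF cs] ..
    have "fin_ip ip (exp_cre_comp h n {#t#}) (exp_cre_comp h n {#u#}) =
      cnj (c * complex_of_real (sqrt (fact n / fact p)) / fact (n - p)) *
      (d * complex_of_real (sqrt (fact n / fact q)) / fact (n - q)) *
      (perK ip (replicate (n - p) h @ xs) (replicate (n - q) h @ ys) / fact n)"
      using pq by (simp add: t u exp_cre_comp_single fin_ip_def sym_ip_perK p_def[symmetric] q_def[symmetric])
    also have "\<dots> = cnj c * d * (complex_of_real (sqrt (fact n / fact p)) * complex_of_real (sqrt (fact n / fact q)) / fact n) *
       (perK ip (replicate (n - p) h @ xs) (replicate (n - q) h @ ys) / (fact (n - p) * fact (n - q)))"
      by (simp add: field_simps)
    also have "\<dots> = cnj c * d / (nf p * nf q) * Tz ip (gh ip h) (ip h h) n xs ys"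
      unfolding scal_id[OF pq] P using pq by (simp add: Tz_def p_def[symmetric] q_def[symmetric])
    finally show ?thesis by (simp add: t u p_def q_def)
  next
    case False
    thus ?thesis by (auto simp: t u exp_cre_comp_single Tz_def)
  qed
qed

lemma sums_sum_mset:
  fixes f :: "'a \<Rightarrow> nat \<Rightarrow> complex"
  shows "(\<And>t. t \<in># M \<Longrightarrow> f t sums s t) \<Longrightarrow> (\<lambda>n. \<Sum>t\<in>#M. f t n) sums (\<Sum>t\<in>#M. s t)"
proof (induction M)
  case empty thus ?case by simp
next
  case (add x M)
  have 1: "f x sums s x" using add.prems by simp
  have 2: "(\<lambda>n. \<Sum>t\<in>#M. f t n) sums (\<Sum>t\<in>#M. s t)" using add.prems by (intro add.IH) simp
  from sums_add[OF 1 2] show ?case by simp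
qed

lemma exp_cre_ip_formula:
  assumes cs: "\<forall>x y. ip y x = cnj (ip x y)"
  shows "exp_cre_ip ip h \<Psi> \<Phi> = exp (ip h h) * CQ ip (gh ip h) \<Psi> \<Phi>"
proof -
  have eq: "fin_ip ip (exp_cre_comp h n \<Psi>) (exp_cre_comp h n \<Phi>) =
     (\<Sum>t\<in>#\<Psi>. \<Sum>u\<in>#\<Phi>. cnj (fst t) * fst u / (nf (length (snd t)) * nf (length (snd u))) * Tz ip (gh ip h) (ip h h) n (snd t) (snd u))" for n
    apply (subst (1 2) exp_cre_comp_sum)
    unfolding fin_ip_summ_left
    unfolding fin_ip_summ_right
    unfolding fin_ip_ecc_single[OF cs] ..
  have "(\<lambda>n. fin_ip ip (exp_cre_comp h n \<Psi>) (exp_cre_comp h n \<Phi>)) sums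
     (\<Sum>t\<in>#\<Psi>. \<Sum>u\<in>#\<Phi>. cnj (fst t) * fst u / (nf (length (snd t)) * nf (length (snd u))) * (exp (ip h h) * Qrec ip (gh ip h) (snd t) (snd u)))"
    unfolding eq by (intro sums_sum_mset sums_mult Tz_sums)
  also have "(\<Sum>t\<in>#\<Psi>. \<Sum>u\<in>#\<Phi>. cnj (fst t) * fst u / (nf (length (snd t)) * nf (length (snd u))) * (exp (ip h h) * Qrec ip (gh ip h) (snd t) (snd u)))
     = exp (ip h h) * CQ ip (gh ip h) \<Psi> \<Phi>"
    unfolding CQ_def by (simp add: sum_mset_distrib_left mult_ac)
  finally show ?thesis unfolding exp_cre_ip_def by (rule sums_unique[symmetric])
qed

lemma CQ_vac: "CQ ip g vac vac = 1"
  by (simp add: CQ_def vac_def)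

lemma tendsto_sum_mset:
  fixes f :: "'a \<Rightarrow> 'b \<Rightarrow> complex"
  shows "(\<And>t. t \<in># M \<Longrightarrow> ((\<lambda>a. f t a) \<longlongrightarrow> l t) F) \<Longrightarrow>
   ((\<lambda>a. \<Sum>t\<in>#M. f t a) \<longlongrightarrow> (\<Sum>t\<in>#M. l t)) F"
proof (induction M)
  case empty thus ?case by simp
next
  case (add x M)
  have 1: "((\<lambda>a. f x a) \<longlongrightarrow> l x) F" using add.prems by simp
  have 2: "((\<lambda>a. \<Sum>t\<in>#M. f t a) \<longlongrightarrow> (\<Sum>t\<in>#M. l t)) F" using add.prems by (intro add.IH) simp
  from tendsto_add[OF 1 2] show ?case by simp
qed

lemma Qrec_tendsto:
  assumes lim: "\<forall>f\<in>T. ((\<lambda>a. pair (gs a) f) \<longlongrightarrow> pair g f) F"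
  shows "set xs \<subseteq> T \<Longrightarrow> set ys \<subseteq> T \<Longrightarrow> ((\<lambda>a. Qrec ip (gs a) xs ys) \<longlongrightarrow> Qrec ip g xs ys) F"
proof (induction xs arbitrary: ys)
  case Nil
  have "((\<lambda>a. \<Prod>i<length ys. pair (gs a) (ys ! i)) \<longlongrightarrow> (\<Prod>i<length ys. pair g (ys ! i))) F"
  proof (intro tendsto_prod)
    fix i assume "i \<in> {..<length ys}"
    hence "ys ! i \<in> T" using Nil by auto
    thus "((\<lambda>a. pair (gs a) (ys ! i)) \<longlongrightarrow> pair g (ys ! i)) F" using lim by blast
  qed
  thus ?case by (simp add: prod_map_nth[symmetric])
next
  case (Cons x xs)
  have "((\<lambda>a. cnj (pair (gs a) x) * Qrec ip (gs a) xs ys + (\<Sum>j<length ys. ip x (ys ! j) * Qrec ip (gs a) xs (dl j ys)))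
     \<longlongrightarrow> cnj (pair g x) * Qrec ip g xs ys + (\<Sum>j<length ys. ip x (ys ! j) * Qrec ip g xs (dl j ys))) F"
    using Cons lim set_dl by (intro tendsto_intros Cons.IH) (auto, blast)
  thus ?case by simp
qed

theorem proposition2p12:
  fixes scal :: "complex \<Rightarrow> 'h::ab_group_add \<Rightarrow> 'h"
    and ip :: "'h \<Rightarrow> 'h \<Rightarrow> complex"
    and T :: "'h set" and tau :: "'h topology"
    and g :: "'h \<Rightarrow> complex"
    and \<Psi> \<Phi> :: "'h fvec"
    and G :: "'i \<Rightarrow> 'h" and F :: "'i filter"
  assumes "complex_hilbert_space scal ip"
    and "dense_cont_embedded scal ip T tau"
    and "g \<in> antidual scal T tau"
    and "in_Ffin T \<Psi>" and "in_Ffin T \<Phi>"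
    and "\<forall>f\<in>T. ((\<lambda>\<alpha>. ip (G \<alpha>) f) \<longlongrightarrow> pair g f) F"
  shows "((\<lambda>\<alpha>. exp_cre_ip ip (G \<alpha>) \<Psi> \<Phi> / exp_cre_ip ip (G \<alpha>) vac vac)
           \<longlongrightarrow> g_ip ip g \<Psi> \<Phi>) F"
proof -
  have cs: "\<forall>x y. ip y x = cnj (ip x y)"
    using assms(1) unfolding complex_hilbert_space_def by blast
  have lim: "\<forall>f\<in>T. ((\<lambda>\<alpha>. pair (gh ip (G \<alpha>)) f) \<longlongrightarrow> pair g f) F"
    using assms(6) by simp
  have eq: "(\<lambda>\<alpha>. exp_cre_ip ip (G \<alpha>) \<Psi> \<Phi> / exp_cre_ip ip (G \<alpha>) vac vac) = (\<lambda>\<alpha>. CQ ip (gh ip (G \<alpha>)) \<Psi> \<Phi>)"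
    by (simp add: exp_cre_ip_formula[OF cs] CQ_vac)
  have "((\<lambda>\<alpha>. CQ ip (gh ip (G \<alpha>)) \<Psi> \<Phi>) \<longlongrightarrow> CQ ip g \<Psi> \<Phi>) F"
    unfolding CQ_def
  proof (intro tendsto_sum_mset tendsto_mult tendsto_const)
    fix t u assume t: "t \<in># \<Psi>" and u: "u \<in># \<Phi>"
    have "set (snd t) \<subseteq> T" using assms(4) t by (simp add: in_Ffin_def)
    moreover have "set (snd u) \<subseteq> T" using assms(5) u by (simp add: in_Ffin_def)
    ultimately show "((\<lambda>\<alpha>. Qrec ip (gh ip (G \<alpha>)) (snd t) (snd u)) \<longlongrightarrow> Qrec ip g (snd t) (snd u)) F"
      by (rule Qrec_tendsto[OF lim])
  qed
  thus ?thesis unfolding eq g_ip_formula .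
qed

end
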